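(* Let $f:A\to B$ be a homomorphism of finite-dimensional semisimple $\mathbb Z_2$-graded algebras over $\mathbb C$ and let $C\subset A$ be a simple graded subalgebra. Then $f(SZ(A,C))=SZ(f(A),f(C))$.
   Context: A homomorphism of graded algebras is a parity-preserving algebra homomorphism. Supercentralizer: $SZ(A,C)$ is the span of homogeneous $a\in A$ with $ac=(-1)^{p(a)p(c)}ca$ for all homogeneous $c\in C$; similarly $SZ(f(A),f(C))$ inside the graded algebra $f(A)$. *)

theory Defs
  imports Complex_Main
begin

definition complex_algebra :: "(complex \<Rightarrow> 'a::ring \<Rightarrow> 'a) \<Rightarrow> bool" where
  "complex_algebra s \<longleftrightarrow> vector_space s \<and>
     (\<forall>c x y. s c (x * y) = s c x * y \<and> s c (x * y) = x * s c y)"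

definition fin_dim :: "(complex \<Rightarrow> 'a::ring \<Rightarrow> 'a) \<Rightarrow> bool" where
  "fin_dim s \<longleftrightarrow> (\<exists>B. finite B \<and> module.span s B = UNIV)"

text \<open>A Z2-grading of the whole algebra: P False = even part, P True = odd part.\<close>
definition graded_algebra :: "(complex \<Rightarrow> 'a::ring \<Rightarrow> 'a) \<Rightarrow> (bool \<Rightarrow> 'a set) \<Rightarrow> bool" where
  "graded_algebra s P \<longleftrightarrow> complex_algebra s \<and>
     module.subspace s (P False) \<and> module.subspace s (P True) \<and>
     P False \<inter> P True = {0} \<and>
     (\<forall>x. \<exists>y z. y \<in> P False \<and> z \<in> P True \<and> x = y + z) \<and>
     (\<forall>p q x y. x \<in> P p \<longrightarrow> y \<in> P q \<longrightarrow> x * y \<in> P (p \<noteq> q))"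

definition graded_subspace :: "(complex \<Rightarrow> 'a::ring \<Rightarrow> 'a) \<Rightarrow> (bool \<Rightarrow> 'a set) \<Rightarrow> 'a set \<Rightarrow> bool" where
  "graded_subspace s P S \<longleftrightarrow> module.subspace s S \<and>
     (\<forall>x\<in>S. \<exists>y z. y \<in> S \<inter> P False \<and> z \<in> S \<inter> P True \<and> x = y + z)"

definition graded_subalgebra :: "(complex \<Rightarrow> 'a::ring \<Rightarrow> 'a) \<Rightarrow> (bool \<Rightarrow> 'a set) \<Rightarrow> 'a set \<Rightarrow> bool" where
  "graded_subalgebra s P S \<longleftrightarrow> graded_subspace s P S \<and> (\<forall>x\<in>S. \<forall>y\<in>S. x * y \<in> S)"

definition graded_ideal :: "(complex \<Rightarrow> 'a::ring \<Rightarrow> 'a) \<Rightarrow> (bool \<Rightarrow> 'a set) \<Rightarrow> 'a set \<Rightarrow> 'a set \<Rightarrow> bool" where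
  "graded_ideal s P S I \<longleftrightarrow> I \<subseteq> S \<and> graded_subspace s P I \<and>
     (\<forall>x\<in>S. \<forall>y\<in>I. x * y \<in> I \<and> y * x \<in> I)"

fun mprod :: "'a::times \<Rightarrow> 'a list \<Rightarrow> 'a" where
  "mprod x [] = x"
| "mprod x (y # ys) = mprod (x * y) ys"

definition nilpotent_set :: "'a::ring set \<Rightarrow> bool" where
  "nilpotent_set I \<longleftrightarrow> (\<exists>n. \<forall>x xs. x \<in> I \<longrightarrow> set xs \<subseteq> I \<longrightarrow> length xs = n \<longrightarrow> mprod x xs = 0)"

definition semisimple_galg :: "(complex \<Rightarrow> 'a::ring \<Rightarrow> 'a) \<Rightarrow> (bool \<Rightarrow> 'a set) \<Rightarrow> 'a set \<Rightarrow> bool" where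
  "semisimple_galg s P S \<longleftrightarrow> (\<forall>I. graded_ideal s P S I \<longrightarrow> nilpotent_set I \<longrightarrow> I = {0})"

definition simple_galg :: "(complex \<Rightarrow> 'a::ring \<Rightarrow> 'a) \<Rightarrow> (bool \<Rightarrow> 'a set) \<Rightarrow> 'a set \<Rightarrow> bool" where
  "simple_galg s P S \<longleftrightarrow> (\<exists>x\<in>S. \<exists>y\<in>S. x * y \<noteq> 0) \<and>
     (\<forall>I. graded_ideal s P S I \<longrightarrow> I = {0} \<or> I = S)"

definition graded_hom :: "(complex \<Rightarrow> 'a::ring \<Rightarrow> 'a) \<Rightarrow> (bool \<Rightarrow> 'a set) \<Rightarrow>
     (complex \<Rightarrow> 'b::ring \<Rightarrow> 'b) \<Rightarrow> (bool \<Rightarrow> 'b set) \<Rightarrow> ('a \<Rightarrow> 'b) \<Rightarrow> bool" where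
  "graded_hom s P t Q f \<longleftrightarrow> Vector_Spaces.linear s t f \<and>
     (\<forall>x y. f (x * y) = f x * f y) \<and> (\<forall>p. f ` P p \<subseteq> Q p)"

text \<open>Supercentralizer SZ(S,C) inside the graded algebra with carrier S and grading
  S \<inter> P p: span of homogeneous a in S with a c = (-1)^(p(a)p(c)) c a for all homogeneous c in C.\<close>
definition SZ :: "(complex \<Rightarrow> 'a::ring \<Rightarrow> 'a) \<Rightarrow> (bool \<Rightarrow> 'a set) \<Rightarrow> 'a set \<Rightarrow> 'a set \<Rightarrow> 'a set" where
  "SZ s P S C = module.span s {a. \<exists>p. a \<in> S \<inter> P p \<and>
      (\<forall>q c. c \<in> C \<inter> P q \<longrightarrow> a * c = (if p \<and> q then - (c * a) else c * a))}"

end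

theory Submission
  imports Defs
begin

locale galg =
  fixes s :: "complex \<Rightarrow> 'a::ring \<Rightarrow> 'a" and P :: "bool \<Rightarrow> 'a set"
  assumes ga: "graded_algebra s P" and fd: "fin_dim s" and ss: "semisimple_galg s P UNIV"
begin

lemma vs: "vector_space s" using ga unfolding graded_algebra_def complex_algebra_def by auto

sublocale V: vector_space s by (rule vs)

lemma smul1: "s c (x*y) = s c x * y"
  using ga unfolding graded_algebra_def complex_algebra_def by blast
lemma smul2: "s c (x*y) = x * s c y"
  using ga unfolding graded_algebra_def complex_algebra_def by blast

lemma Psub: "V.subspace (P p)"
  using ga unfolding graded_algebra_def by (cases p) auto

lemma Pint: "x \<in> P p \<Longrightarrow> x \<in> P (\<not>p) \<Longrightarrow> x = 0"
  using ga unfolding graded_algebra_def by (cases p) auto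

lemma Pdec: "\<exists>y z. y \<in> P False \<and> z \<in> P True \<and> x = y + z"
  using ga unfolding graded_algebra_def by auto

lemma Pmul: "x \<in> P p \<Longrightarrow> y \<in> P q \<Longrightarrow> x * y \<in> P (p \<noteq> q)"
  using ga unfolding graded_algebra_def by auto

definition "Bas = (SOME B. finite B \<and> V.independent B \<and> V.span B = UNIV)"

lemma Bas_ex: "\<exists>B. finite B \<and> V.independent B \<and> V.span B = UNIV"
proof -
  obtain B0 where B0: "finite B0" "V.span B0 = UNIV" using fd unfolding fin_dim_def by auto
  obtain B where B: "V.independent B" "UNIV \<subseteq> V.span B" using V.basis_exists[of UNIV] by metis
  have "finite B" using V.independent_span_bound[OF B0(1) B(1)] B0(2) by auto
  then show ?thesis using B by auto
qed

lemma Bas: "finite Bas" "V.independent Bas" "V.span Bas = UNIV"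
  using someI_ex[OF Bas_ex] unfolding Bas_def by auto

sublocale F: finite_dimensional_vector_space s Bas
  by unfold_locales (use Bas in auto)

lemma Puniq: "y \<in> P False \<Longrightarrow> y' \<in> P False \<Longrightarrow> z \<in> P True \<Longrightarrow> z' \<in> P True
   \<Longrightarrow> y + z = y' + z' \<Longrightarrow> y = y' \<and> z = z'"
proof -
  assume a: "y \<in> P False" "y' \<in> P False" "z \<in> P True" "z' \<in> P True" "y + z = y' + z'"
  have "y - y' = z' - z" using a(5) by (simp add: algebra_simps)
  moreover have "y - y' \<in> P False" using a V.subspace_diff[OF Psub] by blast
  moreover have "z' - z \<in> P True" using a V.subspace_diff[OF Psub] by blast
  ultimately have "y - y' = 0" using Pint[of "y - y'" False] by auto
  then show ?thesis using a(5) by simp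
qed

definition ev :: "'a \<Rightarrow> 'a" where "ev x = (SOME y. y \<in> P False \<and> x - y \<in> P True)"
definition od :: "'a \<Rightarrow> 'a" where "od x = x - ev x"
definition th :: "'a \<Rightarrow> 'a" where "th x = ev x - od x"

lemma ev_prop: "ev x \<in> P False \<and> x - ev x \<in> P True"
proof -
  obtain y z where "y \<in> P False" "z \<in> P True" "x = y + z" using Pdec by blast
  then have "\<exists>y. y \<in> P False \<and> x - y \<in> P True" by (intro exI[of _ y]) simp
  then show ?thesis unfolding ev_def by (rule someI_ex)
qed

lemma ev_P: "ev x \<in> P False" and od_P: "od x \<in> P True" and ev_od: "ev x + od x = x"
  using ev_prop unfolding od_def by auto

lemma ev_unique: "y \<in> P False \<Longrightarrow> z \<in> P True \<Longrightarrow> ev (y + z) = y \<and> od (y + z) = z"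
  using Puniq[of "ev (y+z)" y "od (y+z)" z] ev_P od_P ev_od[of "y+z"] by auto

lemma ev_add: "ev (x + y) = ev x + ev y" and od_add: "od (x + y) = od x + od y"
proof -
  have "ev (ev x + ev y + (od x + od y)) = ev x + ev y \<and> od (ev x + ev y + (od x + od y)) = od x + od y"
    by (rule ev_unique) (use V.subspace_add[OF Psub] ev_P od_P in auto)
  moreover have "ev x + ev y + (od x + od y) = x + y" using ev_od[of x] ev_od[of y] by (simp add: algebra_simps)
  ultimately show "ev (x + y) = ev x + ev y" "od (x + y) = od x + od y" by auto
qed

lemma ev_scale: "ev (s c x) = s c (ev x)" and od_scale: "od (s c x) = s c (od x)"
proof -
  have "ev (s c (ev x) + s c (od x)) = s c (ev x) \<and> od (s c (ev x) + s c (od x)) = s c (od x)"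
    by (rule ev_unique) (use V.subspace_scale[OF Psub] ev_P od_P in auto)
  moreover have "s c (ev x) + s c (od x) = s c x" using ev_od[of x] V.scale_right_distrib[of c "ev x" "od x"] by simp
  ultimately show "ev (s c x) = s c (ev x)" "od (s c x) = s c (od x)" by auto
qed

lemma ev_mult: "ev (x * y) = ev x * ev y + od x * od y" and od_mult: "od (x * y) = ev x * od y + od x * ev y"
proof -
  have "ev (ev x * ev y + od x * od y + (ev x * od y + od x * ev y)) = ev x * ev y + od x * od y \<and>
        od (ev x * ev y + od x * od y + (ev x * od y + od x * ev y)) = ev x * od y + od x * ev y"
  proof (rule ev_unique)
    have "ev x * ev y \<in> P False" using Pmul[OF ev_P ev_P] by simp
    moreover have "od x * od y \<in> P False" using Pmul[OF od_P od_P] by simp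
    ultimately show "ev x * ev y + od x * od y \<in> P False" using V.subspace_add[OF Psub] by blast
    have "ev x * od y \<in> P True" using Pmul[OF ev_P od_P] by simp
    moreover have "od x * ev y \<in> P True" using Pmul[OF od_P ev_P] by simp
    ultimately show "ev x * od y + od x * ev y \<in> P True" using V.subspace_add[OF Psub] by blast
  qed
  moreover have "ev x * ev y + od x * od y + (ev x * od y + od x * ev y) = x * y"
  proof -
    have "x * y = (ev x + od x) * (ev y + od y)" using ev_od by simp
    then show ?thesis by (simp add: distrib_left distrib_right add_ac)
  qed
  ultimately show "ev (x * y) = ev x * ev y + od x * od y" "od (x * y) = ev x * od y + od x * ev y" by auto
qed

lemma th_add: "th (x + y) = th x + th y" unfolding th_def by (simp add: ev_add od_add algebra_simps)
lemma th_scale: "th (s c x) = s c (th x)" unfolding th_def by (simp add: ev_scale od_scale V.scale_right_diff_distrib)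
lemma th_mult: "th (x * y) = th x * th y" unfolding th_def by (simp add: ev_mult od_mult algebra_simps)
lemma th_zero: "th 0 = 0" using th_add[of 0 0] by simp
lemma th_th: "th (th x) = x"
proof -
  have "ev (ev x + (- od x)) = ev x \<and> od (ev x + (- od x)) = - od x"
    by (rule ev_unique) (use V.subspace_neg[OF Psub] ev_P od_P in auto)
  then show ?thesis unfolding th_def[of x] using ev_od[of x] by (simp add: th_def)
qed
lemma ev_th: "s 2 (ev z) = z + th z"
proof -
  have "s 2 (ev z) = ev z + ev z" using V.scale_left_distrib[of 1 1 "ev z"] by simp
  moreover have "z + th z = (ev z + od z) + (ev z - od z)" using ev_od[of z] by (simp add: th_def)
  moreover have "(ev z + od z) + (ev z - od z) = ev z + ev z" by (simp add: algebra_simps)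
  ultimately show ?thesis by simp
qed

end
context galg begin
definition "ideal I \<longleftrightarrow> V.subspace I \<and> (\<forall>x\<in>I. \<forall>a. a * x \<in> I \<and> x * a \<in> I)"

lemma tri_zero:
  assumes "ideal X" "\<forall>x\<in>X. \<forall>y\<in>X. x * y = 0"
  shows "u \<in> X \<Longrightarrow> v \<in> X \<Longrightarrow> u * v * w = 0"
    and "u \<in> X \<Longrightarrow> w \<in> X \<Longrightarrow> u * v * w = 0"
    and "v \<in> X \<Longrightarrow> w \<in> X \<Longrightarrow> u * v * w = 0"
proof -
  show "u \<in> X \<Longrightarrow> v \<in> X \<Longrightarrow> u * v * w = 0" using assms by simp
  show "u \<in> X \<Longrightarrow> w \<in> X \<Longrightarrow> u * v * w = 0" using assms unfolding ideal_def by blast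
  show "v \<in> X \<Longrightarrow> w \<in> X \<Longrightarrow> u * v * w = 0" using assms by (simp add: mult.assoc)
qed

lemma th_ideal: "ideal I \<Longrightarrow> ideal (th ` I)"
  unfolding ideal_def
proof (intro conjI ballI allI)
  assume I: "V.subspace I \<and> (\<forall>x\<in>I. \<forall>a. a * x \<in> I \<and> x * a \<in> I)"
  show "V.subspace (th ` I)"
    unfolding V.subspace_def
  proof (intro conjI ballI allI)
    show "0 \<in> th ` I" using I V.subspace_0 th_zero by (metis image_eqI)
    fix x y assume "x \<in> th ` I" "y \<in> th ` I"
    then obtain x' y' where "x' \<in> I" "y' \<in> I" "x = th x'" "y = th y'" by auto
    then show "x + y \<in> th ` I" using I V.subspace_add th_add by (metis image_eqI)
  next
    fix c x assume "x \<in> th ` I"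
    then obtain x' where "x' \<in> I" "x = th x'" by auto
    then show "s c x \<in> th ` I" using I V.subspace_scale th_scale by (metis image_eqI)
  qed
  fix x a assume "x \<in> th ` I"
  then obtain x' where x': "x' \<in> I" "x = th x'" by auto
  have "a * x = th (th a * x')" using x' th_mult th_th by metis
  then show "a * x \<in> th ` I" using I x' by blast
  have "x * a = th (x' * th a)" using x' th_mult th_th by metis
  then show "x * a \<in> th ` I" using I x' by blast
qed

lemma SP0:
  assumes I: "ideal I" and Z: "\<forall>x\<in>I. \<forall>y\<in>I. x * y = 0"
  shows "I \<subseteq> {0}"
proof -
  define J where "J = {x + th y | x y. x \<in> I \<and> y \<in> I}"
  have Isub: "V.subspace I" using I unfolding ideal_def by auto
  have I2: "ideal (th ` I)" using th_ideal[OF I] .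
  have Z2: "\<forall>x\<in>th ` I. \<forall>y\<in>th ` I. x * y = 0" using Z by (auto simp: th_mult[symmetric] th_zero)
  note t1 = tri_zero[OF I Z] and t2 = tri_zero[OF I2 Z2]
  have Jsub: "V.subspace J"
    unfolding V.subspace_def J_def
  proof (intro conjI ballI allI)
    show "0 \<in> {x + th y |x y. x \<in> I \<and> y \<in> I}" using V.subspace_0[OF Isub] th_zero by force
  next
    fix u v assume "u \<in> {x + th y |x y. x \<in> I \<and> y \<in> I}" "v \<in> {x + th y |x y. x \<in> I \<and> y \<in> I}"
    then obtain x y x' y' where "x \<in> I" "y \<in> I" "x' \<in> I" "y' \<in> I" "u = x + th y" "v = x' + th y'" by auto
    moreover have "u + v = (x + x') + th (y + y')" using calculation th_add by (simp add: algebra_simps)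
    ultimately show "u + v \<in> {x + th y |x y. x \<in> I \<and> y \<in> I}" using V.subspace_add[OF Isub] by blast
  next
    fix c u assume "u \<in> {x + th y |x y. x \<in> I \<and> y \<in> I}"
    then obtain x y where "x \<in> I" "y \<in> I" "u = x + th y" by auto
    moreover have "s c u = s c x + th (s c y)" using calculation th_scale V.scale_right_distrib by metis
    ultimately show "s c u \<in> {x + th y |x y. x \<in> I \<and> y \<in> I}" using V.subspace_scale[OF Isub] by blast
  qed
  have Jid: "\<forall>z\<in>J. \<forall>a. a * z \<in> J \<and> z * a \<in> J"
  proof (intro ballI allI conjI)
    fix z a assume "z \<in> J"
    then obtain x y where xy: "x \<in> I" "y \<in> I" "z = x + th y" unfolding J_def by auto
    have "a * z = a * x + th (th a * y)" using xy th_mult th_th by (simp add: distrib_left)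
    then show "a * z \<in> J" unfolding J_def using I xy unfolding ideal_def by blast
    have "z * a = x * a + th (y * th a)" using xy th_mult th_th by (simp add: distrib_right)
    then show "z * a \<in> J" unfolding J_def using I xy unfolding ideal_def by blast
  qed
  have Jev: "ev z \<in> J" if "z \<in> J" for z
  proof -
    obtain x y where xy: "x \<in> I" "y \<in> I" "z = x + th y" using \<open>z \<in> J\<close> unfolding J_def by auto
    have "s 2 (ev z) = (x + y) + th (x + y)" using ev_th[of z] xy th_add th_th by (simp add: algebra_simps)
    then have "s (1/2) (s 2 (ev z)) = s (1/2) (x + y) + th (s (1/2) (x + y))"
      by (simp only: V.scale_right_distrib[of "1/2" "x+y" "th (x+y)"] th_scale)
    moreover have "s (1/2) (s 2 (ev z)) = ev z" by simp
    ultimately have "ev z = s (1/2) (x + y) + th (s (1/2) (x + y))" by simp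
    moreover have "s (1/2) (x + y) \<in> I" using Isub xy V.subspace_add V.subspace_scale by blast
    ultimately show ?thesis unfolding J_def by blast
  qed
  have gi: "graded_ideal s P UNIV J"
    unfolding graded_ideal_def graded_subspace_def
  proof (intro conjI ballI allI)
    show "J \<subseteq> UNIV" by simp
    show "V.subspace J" by (rule Jsub)
  next
    fix z assume z: "z \<in> J"
    have "od z \<in> J" using V.subspace_diff[OF Jsub z Jev[OF z]] unfolding od_def .
    then show "\<exists>y w. y \<in> J \<inter> P False \<and> w \<in> J \<inter> P True \<and> z = y + w"
      using Jev[OF z] ev_P od_P ev_od[of z] by (metis IntI)
  next
    fix x y :: 'a assume "x \<in> UNIV" "y \<in> J" then show "x * y \<in> J" "y * x \<in> J" using Jid by auto
  qed
  have "nilpotent_set J" unfolding nilpotent_set_def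
  proof (intro exI[of _ 2] allI impI)
    fix u xs assume "u \<in> J" "set xs \<subseteq> J" "length xs = 2"
    then obtain v w where vw: "xs = [v, w]" "v \<in> J" "w \<in> J"
      by (cases xs; cases "tl xs") (auto simp: numeral_2_eq_2)
    obtain x1 y1 where 1: "x1 \<in> I" "y1 \<in> I" "u = x1 + th y1" using \<open>u \<in> J\<close> unfolding J_def by auto
    obtain x2 y2 where 2: "x2 \<in> I" "y2 \<in> I" "v = x2 + th y2" using vw unfolding J_def by auto
    obtain x3 y3 where 3: "x3 \<in> I" "y3 \<in> I" "w = x3 + th y3" using vw unfolding J_def by auto
    have i: "th y1 \<in> th ` I" "th y2 \<in> th ` I" "th y3 \<in> th ` I" using 1 2 3 by auto
    show "mprod u xs = 0" using 1 2 3 i vw t1 t2 by (simp add: distrib_left distrib_right)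
  qed
  then have "J = {0}" using ss gi unfolding semisimple_galg_def by blast
  moreover have "I \<subseteq> J" unfolding J_def using V.subspace_0[OF Isub] th_zero by force
  ultimately show ?thesis by simp
qed

definition "rideal M \<longleftrightarrow> V.subspace M \<and> (\<forall>m\<in>M. \<forall>a. m * a \<in> M)"
definition "lideal M \<longleftrightarrow> V.subspace M \<and> (\<forall>m\<in>M. \<forall>a. a * m \<in> M)"

lemma span_closed:
  assumes G: "\<And>x. x \<in> G \<Longrightarrow> h x \<in> V.span G"
    and ha: "\<And>x y. h (x + y) = h x + h y" and hs: "\<And>c x. h (s c x) = s c (h x)"
    and x: "x \<in> V.span G"
  shows "h x \<in> V.span G"
proof -
  have h0: "h 0 = 0" using ha[of 0 0] by simp
  have "V.subspace {x. h x \<in> V.span G}"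
    unfolding V.subspace_def using h0 ha hs V.span_zero V.span_add V.span_scale by auto
  then show ?thesis using V.span_induct[OF x, of "\<lambda>x. h x \<in> V.span G"] G by auto
qed

lemma sub_r0: "V.subspace {y. a * y = 0}"
  unfolding V.subspace_def by (auto simp: distrib_left smul2[symmetric])
lemma sub_l0: "V.subspace {x. x * b = 0}"
  unfolding V.subspace_def by (auto simp: distrib_right smul1[symmetric])

lemma span_prod_zero:
  assumes G: "\<forall>x\<in>G. \<forall>y\<in>G. x * y = 0" and x: "x \<in> V.span G" and y: "y \<in> V.span G"
  shows "x * y = 0"
proof -
  have 1: "a * y = 0" if "a \<in> G" for a
    using V.span_induct[OF y, of "\<lambda>y. a * y = 0"] sub_r0[of a] G that by auto
  show ?thesis
    using V.span_induct[OF x, of "\<lambda>x. x * y = 0"] sub_l0[of y] 1 by auto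
qed

lemma SPr:
  assumes M: "rideal M" and Z: "\<forall>x\<in>M. \<forall>y\<in>M. x * y = 0"
  shows "M \<subseteq> {0}"
proof -
  define G where "G = M \<union> {a * m | a m. m \<in> M}"
  have Mr: "m * a \<in> M" if "m \<in> M" for m a using M that unfolding rideal_def by auto
  have l: "a * x \<in> V.span G" if "x \<in> V.span G" for a x
  proof (rule span_closed[OF _ _ _ that])
    fix x assume "x \<in> G"
    then have "a * x \<in> G" unfolding G_def by (auto simp: mult.assoc[symmetric])
    then show "a * x \<in> V.span G" by (rule V.span_base)
  qed (auto simp: distrib_left smul2[symmetric])
  have r: "x * a \<in> V.span G" if "x \<in> V.span G" for a x
  proof (rule span_closed[OF _ _ _ that])
    fix x assume "x \<in> G"
    then have "x * a \<in> G" unfolding G_def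
    proof (elim UnE)
      assume "x \<in> M" then show "x * a \<in> M \<union> {a * m |a m. m \<in> M}" using Mr by auto
    next
      assume "x \<in> {a * m |a m. m \<in> M}"
      then obtain b m where "m \<in> M" "x = b * m" by auto
      then have "x * a = b * (m * a)" "m * a \<in> M" using Mr by (auto simp: mult.assoc)
      then show "x * a \<in> M \<union> {a * m |a m. m \<in> M}" by blast
    qed
    then show "x * a \<in> V.span G" by (rule V.span_base)
  qed (auto simp: distrib_right smul1[symmetric])
  have I: "ideal (V.span G)" unfolding ideal_def using l r by auto
  have GZ: "\<forall>x\<in>G. \<forall>y\<in>G. x * y = 0"
  proof (intro ballI)
    fix x y assume "x \<in> G" "y \<in> G"
    then show "x * y = 0" unfolding G_def
    proof (elim UnE)
      assume "x \<in> M" "y \<in> M" then show ?thesis using Z by auto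
    next
      assume "x \<in> M" "y \<in> {a * m |a m. m \<in> M}"
      then obtain a m where "m \<in> M" "y = a * m" by auto
      then show ?thesis using Z Mr \<open>x \<in> M\<close> by (simp add: mult.assoc[symmetric])
    next
      assume "x \<in> {a * m |a m. m \<in> M}" "y \<in> M"
      then obtain a m where "m \<in> M" "x = a * m" by auto
      then show ?thesis using Z \<open>y \<in> M\<close> by (simp add: mult.assoc)
    next
      assume "x \<in> {a * m |a m. m \<in> M}" "y \<in> {a * m |a m. m \<in> M}"
      then obtain a m b n where "m \<in> M" "x = a * m" "n \<in> M" "y = b * n" by auto
      then show ?thesis using Z Mr by (simp add: mult.assoc) (metis mult.assoc mult_zero_right)
    qed
  qed
  have "V.span G \<subseteq> {0}"
    by (rule SP0[OF I]) (use span_prod_zero[OF GZ] in auto)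
  moreover have "M \<subseteq> V.span G" using V.span_superset[of G] unfolding G_def by blast
  ultimately show ?thesis by auto
qed

lemma SPl:
  assumes M: "lideal M" and Z: "\<forall>x\<in>M. \<forall>y\<in>M. x * y = 0"
  shows "M \<subseteq> {0}"
proof -
  define G where "G = M \<union> {m * a | a m. m \<in> M}"
  have Ml: "a * m \<in> M" if "m \<in> M" for m a using M that unfolding lideal_def by auto
  have l: "a * x \<in> V.span G" if "x \<in> V.span G" for a x
  proof (rule span_closed[OF _ _ _ that])
    fix x assume "x \<in> G"
    then have "a * x \<in> G" unfolding G_def
    proof (elim UnE)
      assume "x \<in> M" then show "a * x \<in> M \<union> {m * a |a m. m \<in> M}" using Ml by auto
    next
      assume "x \<in> {m * a |a m. m \<in> M}"
      then obtain b m where "m \<in> M" "x = m * b" by auto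
      then have "a * x = (a * m) * b" "a * m \<in> M" using Ml by (auto simp: mult.assoc)
      then show "a * x \<in> M \<union> {m * a |a m. m \<in> M}" by blast
    qed
    then show "a * x \<in> V.span G" by (rule V.span_base)
  qed (auto simp: distrib_left smul2[symmetric])
  have r: "x * a \<in> V.span G" if "x \<in> V.span G" for a x
  proof (rule span_closed[OF _ _ _ that])
    fix x assume "x \<in> G"
    then have "x * a \<in> G" unfolding G_def by (auto simp: mult.assoc)
    then show "x * a \<in> V.span G" by (rule V.span_base)
  qed (auto simp: distrib_right smul1[symmetric])
  have I: "ideal (V.span G)" unfolding ideal_def using l r by auto
  have GZ: "\<forall>x\<in>G. \<forall>y\<in>G. x * y = 0"
  proof (intro ballI)
    fix x y assume "x \<in> G" "y \<in> G"
    then show "x * y = 0" unfolding G_def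
    proof (elim UnE)
      assume "x \<in> M" "y \<in> M" then show ?thesis using Z by auto
    next
      assume "x \<in> M" "y \<in> {m * a |a m. m \<in> M}"
      then obtain a m where "m \<in> M" "y = m * a" by auto
      then show ?thesis using Z \<open>x \<in> M\<close> by (simp add: mult.assoc[symmetric])
    next
      assume "x \<in> {m * a |a m. m \<in> M}" "y \<in> M"
      then obtain a m where "m \<in> M" "x = m * a" by auto
      then show ?thesis using Z Ml \<open>y \<in> M\<close> by (simp add: mult.assoc)
    next
      assume "x \<in> {m * a |a m. m \<in> M}" "y \<in> {m * a |a m. m \<in> M}"
      then obtain a m b n where "m \<in> M" "x = m * a" "n \<in> M" "y = n * b" by auto
      then show ?thesis using Z Ml by (simp add: mult.assoc) (metis mult.assoc mult_zero_left)
    qed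
  qed
  have "V.span G \<subseteq> {0}"
    by (rule SP0[OF I]) (use span_prod_zero[OF GZ] in auto)
  moreover have "M \<subseteq> V.span G" using V.span_superset[of G] unfolding G_def by blast
  ultimately show ?thesis by auto
qed

lemma idem_exists:
  assumes T: "rideal T" and x0: "x0 \<in> T" "x0 \<noteq> 0"
  shows "\<exists>g\<in>T. g \<noteq> 0 \<and> g * g = g"
proof -
  let ?Q = "\<lambda>M. rideal M \<and> M \<subseteq> T \<and> (\<exists>x\<in>M. x \<noteq> 0)"
  obtain M where QM: "?Q M" and minM: "\<And>M'. ?Q M' \<Longrightarrow> V.dim M \<le> V.dim M'"
    using ex_has_least_nat[of ?Q T V.dim] T x0 by blast
  have Msub: "V.subspace M" and Mr: "\<And>m a. m \<in> M \<Longrightarrow> m * a \<in> M"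
    using QM unfolding rideal_def by auto
  have "\<exists>x\<in>M. \<exists>y\<in>M. x * y \<noteq> 0"
  proof (rule ccontr)
    assume "\<not> ?thesis"
    then have "M \<subseteq> {0}" using SPr[of M] QM by blast
    then show False using QM by auto
  qed
  then obtain x y where xy: "x \<in> M" "y \<in> M" "x * y \<noteq> 0" by blast
  define xM where "xM = (\<lambda>m. x * m) ` M"
  have xMsub: "V.subspace xM" unfolding V.subspace_def xM_def
  proof (intro conjI ballI allI)
    show "0 \<in> (*) x ` M" using V.subspace_0[OF Msub] by (metis image_eqI mult_zero_right)
  next
    fix u v assume "u \<in> (*) x ` M" "v \<in> (*) x ` M"
    then obtain m n where "m \<in> M" "n \<in> M" "u = x * m" "v = x * n" by auto
    then show "u + v \<in> (*) x ` M" using V.subspace_add[OF Msub] by (metis distrib_left image_eqI)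
  next
    fix c u assume "u \<in> (*) x ` M"
    then obtain m where "m \<in> M" "u = x * m" by auto
    then show "s c u \<in> (*) x ` M" using V.subspace_scale[OF Msub] by (metis smul2 image_eqI)
  qed
  have xMr: "rideal xM" unfolding rideal_def
  proof (intro conjI ballI allI xMsub)
    fix u a assume "u \<in> xM"
    then obtain m where "m \<in> M" "u = x * m" unfolding xM_def by auto
    then show "u * a \<in> xM" unfolding xM_def using Mr by (metis image_eqI mult.assoc)
  qed
  have xMM: "xM \<subseteq> M" unfolding xM_def using Mr xy(1) by auto
  have "xM = M"
  proof (rule F.subspace_dim_equal[OF xMsub Msub xMM])
    show "V.dim M \<le> V.dim xM" using minM[of xM] xMr xMM QM xy unfolding xM_def by auto
  qed
  then have "x \<in> xM" using xy(1) by simp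
  then obtain e where e0: "e \<in> M" "x = x * e" unfolding xM_def by auto
  then have e: "e \<in> M" "x * e = x" by auto
  define R where "R = {m \<in> M. x * m = 0}"
  have Rsub: "V.subspace R" unfolding R_def V.subspace_def
    using V.subspace_0[OF Msub] V.subspace_add[OF Msub] V.subspace_scale[OF Msub]
    by (auto simp: distrib_left smul2[symmetric])
  have Rr: "rideal R" unfolding rideal_def R_def using Rsub Mr
    by (auto simp: mult.assoc[symmetric] R_def)
  have R0: "R \<subseteq> {0}"
  proof (rule ccontr)
    assume "\<not> R \<subseteq> {0}"
    then have "?Q R" using Rr QM unfolding R_def by auto
    then have "V.dim M \<le> V.dim R" by (rule minM)
    moreover have "R \<subseteq> M" by (auto simp: R_def)
    ultimately have "R = M" using F.subspace_dim_equal[OF Rsub Msub] by blast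
    then show False using xy unfolding R_def by auto
  qed
  have "e * e - e \<in> R" unfolding R_def
    using e Mr V.subspace_diff[OF Msub] by (simp add: right_diff_distrib mult.assoc[symmetric])
  then have "e * e = e" using R0 by auto
  moreover have "e \<noteq> 0" using e xy by auto
  ultimately show ?thesis using e QM by auto
qed


end
context galg begin
lemma unit_exists:
  assumes K: "ideal K"
  shows "\<exists>e\<in>K. \<forall>k\<in>K. e * k = k \<and> k * e = k"
proof -
  have Ksub: "V.subspace K" and Kl: "\<And>k a. k \<in> K \<Longrightarrow> a * k \<in> K" and Kr: "\<And>k a. k \<in> K \<Longrightarrow> k * a \<in> K"
    using K unfolding ideal_def by auto
  define Tf where "Tf e = (\<lambda>k. k - e * k) ` K" for e
  have Tsub: "V.subspace (Tf e)" for e unfolding V.subspace_def Tf_def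
  proof (intro conjI ballI allI)
    show "0 \<in> (\<lambda>k. k - e * k) ` K" by (rule rev_image_eqI[OF V.subspace_0[OF Ksub]]) simp
  next
    fix u v assume "u \<in> (\<lambda>k. k - e * k) ` K" "v \<in> (\<lambda>k. k - e * k) ` K"
    then obtain m n where mn: "m \<in> K" "n \<in> K" "u = m - e * m" "v = n - e * n" by auto
    have "u + v = (m + n) - e * (m + n)" unfolding mn(3,4) by (simp add: algebra_simps)
    with mn show "u + v \<in> (\<lambda>k. k - e * k) ` K" using V.subspace_add[OF Ksub] by blast
  next
    fix c u assume "u \<in> (\<lambda>k. k - e * k) ` K"
    then obtain m where mn: "m \<in> K" "u = m - e * m" by auto
    have "s c u = s c m - e * s c m" unfolding mn(2)
      by (simp add: V.scale_right_diff_distrib smul2)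
    with mn show "s c u \<in> (\<lambda>k. k - e * k) ` K" using V.subspace_scale[OF Ksub] by blast
  qed
  have Tr: "rideal (Tf e)" for e unfolding rideal_def
  proof (intro conjI ballI allI Tsub)
    fix u a assume "u \<in> Tf e"
    then obtain m where mm: "m \<in> K" "u = m - e * m" unfolding Tf_def by auto
    have "u * a = m * a - e * (m * a)" unfolding mm(2) by (simp add: algebra_simps)
    moreover have "m * a \<in> K" using Kr mm by auto
    ultimately show "u * a \<in> Tf e" unfolding Tf_def by blast
  qed
  have TK: "Tf e \<subseteq> K" if "e \<in> K" for e
    unfolding Tf_def using Kl V.subspace_diff[OF Ksub] by auto
  let ?Q = "\<lambda>e. e \<in> K \<and> e * e = e"
  have "?Q 0" using V.subspace_0[OF Ksub] by simp
  then obtain e where Qe: "?Q e" and mine: "\<And>e'. ?Q e' \<Longrightarrow> V.dim (Tf e) \<le> V.dim (Tf e')"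
    using ex_has_least_nat[of ?Q 0 "\<lambda>e. V.dim (Tf e)"] by blast
  have left: "e * k = k" if "k \<in> K" for k
  proof (rule ccontr)
    assume "e * k \<noteq> k"
    then have "k - e * k \<in> Tf e" "k - e * k \<noteq> 0" using that unfolding Tf_def by auto
    then obtain g where g: "g \<in> Tf e" "g \<noteq> 0" "g * g = g" using idem_exists[OF Tr] by blast
    then obtain k0 where k0: "k0 \<in> K" "g = k0 - e * k0" unfolding Tf_def by auto
    have eg: "e * g = 0" using k0 Qe by (simp add: right_diff_distrib mult.assoc[symmetric])
    have gK: "g \<in> K" using TK Qe g by auto
    define e' where "e' = e + g - g * e"
    have e'K: "e' \<in> K" unfolding e'_def using gK Qe Kr V.subspace_add[OF Ksub] V.subspace_diff[OF Ksub] by auto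
    have ee: "e * e = e" and gg: "g * g = g" using Qe g by auto
    have ee2: "e * (e * z) = e * z" and gg2: "g * (g * z) = g * z" and eg2: "e * (g * z) = 0" for z
      using ee gg eg by (simp_all add: mult.assoc[symmetric])
    have e'e: "e' * e = e" unfolding e'_def
      by (simp add: distrib_right left_diff_distrib mult.assoc ee)
    have e'g: "e' * g = g" unfolding e'_def
      by (simp add: distrib_right left_diff_distrib mult.assoc eg gg)
    have "e' * (e + g - g * e) = e' * e + e' * g - e' * g * e"
      by (simp add: distrib_left right_diff_distrib mult.assoc)
    then have e'e': "e' * e' = e'" using e'e e'g unfolding e'_def[symmetric] by (simp add: e'_def)
    have sub: "Tf e' \<subseteq> Tf e"
    proof
      fix u assume "u \<in> Tf e'"
      then obtain k where k: "k \<in> K" "u = k - e' * k" unfolding Tf_def by auto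
      have "e' * k = e * k + g * k - g * (e * k)" unfolding e'_def by (simp add: distrib_right left_diff_distrib mult.assoc)
      then have "u = (k - e * k) - g * (k - e * k)" unfolding k by (simp add: right_diff_distrib)
      moreover have "k - e * k \<in> Tf e" using k unfolding Tf_def by auto
      moreover have "g * (k - e * k) \<in> Tf e" using g(1) Tr unfolding rideal_def by auto
      ultimately show "u \<in> Tf e" using V.subspace_diff[OF Tsub] by auto
    qed
    have "g \<notin> Tf e'"
    proof
      assume "g \<in> Tf e'"
      then obtain k where k: "k \<in> K" "g = k - e' * k" unfolding Tf_def by auto
      have "e' * g = 0" using k e'e' by (simp add: right_diff_distrib mult.assoc[symmetric])
      moreover have "e' * g = g" by (rule e'g)
      ultimately show False using g by simp
    qed
    then have neq: "Tf e' \<noteq> Tf e" using g by auto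
    have "V.dim (Tf e) \<le> V.dim (Tf e')" using mine[of e'] e'K e'e' by auto
    then have "Tf e' = Tf e" by (rule F.subspace_dim_equal[OF Tsub Tsub sub])
    then show False using neq by simp
  qed
  define L where "L = (\<lambda>k. k - k * e) ` K"
  have Lsub: "V.subspace L" unfolding V.subspace_def L_def
  proof (intro conjI ballI allI)
    show "0 \<in> (\<lambda>k. k - k * e) ` K" by (rule rev_image_eqI[OF V.subspace_0[OF Ksub]]) simp
  next
    fix u v assume "u \<in> (\<lambda>k. k - k * e) ` K" "v \<in> (\<lambda>k. k - k * e) ` K"
    then obtain m n where mn: "m \<in> K" "n \<in> K" "u = m - m * e" "v = n - n * e" by auto
    have "u + v = (m + n) - (m + n) * e" unfolding mn(3,4) by (simp add: algebra_simps)
    with mn show "u + v \<in> (\<lambda>k. k - k * e) ` K" using V.subspace_add[OF Ksub] by blast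
  next
    fix c u assume "u \<in> (\<lambda>k. k - k * e) ` K"
    then obtain m where mn: "m \<in> K" "u = m - m * e" by auto
    have "s c u = s c m - s c m * e" unfolding mn(2)
      by (simp add: V.scale_right_diff_distrib smul1)
    with mn show "s c u \<in> (\<lambda>k. k - k * e) ` K" using V.subspace_scale[OF Ksub] by blast
  qed
  have Ll: "lideal L" unfolding lideal_def
  proof (intro conjI ballI allI Lsub)
    fix u a assume "u \<in> L"
    then obtain m where mm: "m \<in> K" "u = m - m * e" unfolding L_def by auto
    have "a * u = a * m - (a * m) * e" unfolding mm(2) by (simp add: algebra_simps)
    moreover have "a * m \<in> K" using Kl mm by auto
    ultimately show "a * u \<in> L" unfolding L_def by blast
  qed
  have LZ: "\<forall>u\<in>L. \<forall>v\<in>L. u * v = 0"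
  proof (intro ballI)
    fix u v assume "u \<in> L" "v \<in> L"
    then obtain m n where mn: "m \<in> K" "n \<in> K" "u = m - m * e" "v = n - n * e" unfolding L_def by auto
    have vK: "v \<in> K" using mn Kr V.subspace_diff[OF Ksub] by auto
    have "u * v = u * (e * v)" using left[OF vK] by simp
    also have "\<dots> = (m * e - m * e * e) * v" unfolding mn by (simp add: algebra_simps)
    also have "\<dots> = 0" using Qe by (simp add: mult.assoc)
    finally show "u * v = 0" .
  qed
  have "L \<subseteq> {0}" by (rule SPl[OF Ll LZ])
  then have "k * e = k" if "k \<in> K" for k using that unfolding L_def by auto
  then show ?thesis using left Qe by blast
qed

end

theorem mainTheorem12:
  fixes s :: "complex \<Rightarrow> 'a::ring \<Rightarrow> 'a" and P :: "bool \<Rightarrow> 'a set"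
    and t :: "complex \<Rightarrow> 'b::ring \<Rightarrow> 'b" and Q :: "bool \<Rightarrow> 'b set"
    and f :: "'a \<Rightarrow> 'b" and C :: "'a set"
  assumes "graded_algebra s P" and "fin_dim s" and "semisimple_galg s P UNIV"
    and "graded_algebra t Q" and "fin_dim t" and "semisimple_galg t Q UNIV"
    and "graded_hom s P t Q f"
    and "graded_subalgebra s P C" and "simple_galg s P C"
  shows "f ` SZ s P UNIV C = SZ t Q (range f) (f ` C)"
proof -
  interpret G: galg s P using assms(1-3) by unfold_locales
  interpret H: galg t Q using assms(4-6) by unfold_locales
  have lin: "Vector_Spaces.linear s t f" and fmul: "\<And>x y. f (x * y) = f x * f y"
    using assms(7) unfolding graded_hom_def by auto
  have fP: "\<And>x p. x \<in> P p \<Longrightarrow> f x \<in> Q p"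
    using assms(7) unfolding graded_hom_def by blast
  have mh: "module_hom s t f" using lin by (simp add: module_hom_iff_linear)
  have fadd: "\<And>x y. f (x + y) = f x + f y" and fscale: "\<And>c x. f (s c x) = t c (f x)"
    using mh unfolding module_hom_iff by auto
  have f0: "f 0 = 0" using fadd[of 0 0] by simp
  have fneg: "f (- x) = - f x" for x using fadd[of x "- x"] f0 minus_unique[of "f x" "f (- x)"] by simp
  have fdiff: "f (x - y) = f x - f y" for x y using fadd[of x "- y"] fneg[of y] by simp
  define K where "K = {x. f x = 0}"
  have Kid: "G.ideal K" unfolding G.ideal_def K_def G.V.subspace_def
    using f0 fadd fscale fmul by auto
  obtain e where e: "e \<in> K" "\<And>k. k \<in> K \<Longrightarrow> e * k = k \<and> k * e = k"
    using G.unit_exists[OF Kid] by blast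
  define cp where "cp q x = (if q then G.od x else G.ev x)" for q x
  have cpP: "cp q x \<in> P q" for q x unfolding cp_def using G.ev_P G.od_P by auto
  have split0: "f z = 0" if "y \<in> P r" "z \<in> P (\<not> r)" "f y + f z \<in> Q r" for y z r
  proof -
    have "f z = (f y + f z) - f y" by simp
    also have "\<dots> \<in> Q r" using H.V.subspace_diff[OF H.Psub that(3) fP[OF that(1)]] .
    finally show ?thesis using H.Pint fP[OF that(2)] by blast
  qed
  have fcp: "f (cp q x) = f x" if "f x \<in> Q q" for q x
  proof (cases q)
    case True
    have "f (G.od x) + f (G.ev x) = f x" using G.ev_od[of x] fadd[of "G.ev x" "G.od x"] by (simp add: add.commute)
    then have "f (G.ev x) = 0" using split0[where y="G.od x" and z="G.ev x" and r=True] G.ev_P G.od_P that True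
      by simp
    then show ?thesis using True \<open>f (G.od x) + f (G.ev x) = f x\<close> unfolding cp_def by simp
  next
    case False
    have "f (G.ev x) + f (G.od x) = f x" using G.ev_od[of x] fadd[of "G.ev x" "G.od x"] by simp
    then have "f (G.od x) = 0" using split0[where y="G.ev x" and z="G.od x" and r=False] G.ev_P G.od_P that False
      by simp
    then show ?thesis using False \<open>f (G.ev x) + f (G.od x) = f x\<close> unfolding cp_def by simp
  qed
  have Csub: "G.V.subspace C" and Cdec: "\<And>c. c \<in> C \<Longrightarrow> \<exists>y z. y \<in> C \<inter> P False \<and> z \<in> C \<inter> P True \<and> c = y + z"
    using assms(8) unfolding graded_subalgebra_def graded_subspace_def by auto
  have cpC: "cp q c \<in> C" if "c \<in> C" for q c
  proof -
    obtain y z where yz: "y \<in> C \<inter> P False" "z \<in> C \<inter> P True" "c = y + z" using Cdec[OF \<open>c \<in> C\<close>] by blast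
    then have "G.ev c = y \<and> G.od c = z" using G.ev_unique by auto
    then show ?thesis using yz unfolding cp_def by auto
  qed
  define N where "N = {x. \<forall>k\<in>K. x * k = 0 \<and> k * x = 0}"
  have Kth: "G.th k \<in> K" if "k \<in> K" for k
  proof -
    have "f (cp True k) = f k" "f (cp False k) = f k" using that fcp H.V.subspace_0[OF H.Psub]
      unfolding K_def by auto
    then show ?thesis using that unfolding K_def G.th_def cp_def by (simp add: fdiff)
  qed
  have Nsub: "G.V.subspace N" unfolding N_def G.V.subspace_def
    by (auto simp: distrib_left distrib_right G.smul1[symmetric] G.smul2[symmetric])
  have Nl: "a * n \<in> N" and Nr: "n * a \<in> N" if "n \<in> N" for n a
  proof -
    have "a * k \<in> K" "k * a \<in> K" if "k \<in> K" for k using Kid that unfolding G.ideal_def by auto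
    note Ka = this
    have nk: "n * k = 0" "k * n = 0" if "k \<in> K" for k using \<open>n \<in> N\<close> that unfolding N_def by auto
    show "a * n \<in> N" unfolding N_def
    proof (intro CollectI ballI conjI)
      fix k assume k: "k \<in> K"
      show "a * n * k = 0" using nk[OF k] by (simp add: mult.assoc)
      have "k * (a * n) = (k * a) * n" by (simp add: mult.assoc)
      then show "k * (a * n) = 0" using nk(2)[OF Ka(2)[OF k]] by simp
    qed
    show "n * a \<in> N" unfolding N_def
    proof (intro CollectI ballI conjI)
      fix k assume k: "k \<in> K"
      show "k * (n * a) = 0" using nk[OF k] by (simp add: mult.assoc[symmetric])
      have "n * a * k = n * (a * k)" by (simp add: mult.assoc)
      then show "n * a * k = 0" using nk(1)[OF Ka(1)[OF k]] by simp
    qed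
  qed
  have Nth: "G.th n \<in> N" if "n \<in> N" for n
  proof -
    have "G.th n * k = 0 \<and> k * G.th n = 0" if "k \<in> K" for k
    proof -
      have "G.th n * k = G.th (n * G.th k)" "k * G.th n = G.th (G.th k * n)"
        using G.th_mult G.th_th by metis+
      then show ?thesis using Kth[OF that] \<open>n \<in> N\<close> G.th_zero unfolding N_def by auto
    qed
    then show ?thesis unfolding N_def by auto
  qed
  have Ncp: "cp q n \<in> N" if "n \<in> N" for q n
  proof -
    have "G.ev n = s (1/2) (s 2 (G.ev n))" by simp
    also have "\<dots> = s (1/2) (n + G.th n)" using G.ev_th by simp
    finally have ev: "G.ev n \<in> N" using G.V.subspace_scale[OF Nsub] G.V.subspace_add[OF Nsub that Nth[OF that]]
      by simp
    moreover have "G.od n \<in> N" unfolding G.od_def using G.V.subspace_diff[OF Nsub that ev] .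
    ultimately show ?thesis unfolding cp_def by auto
  qed
  have KN: "z = 0" if "z \<in> K" "z \<in> N" for z
  proof -
    have "e * z = z" using e(2)[OF that(1)] by simp
    moreover have "e * z = 0" using that(2) e(1) unfolding N_def by simp
    ultimately show ?thesis by simp
  qed
  have Nmem: "x - e * x \<in> N" for x
  proof -
    have "k * (x - e * x) = 0 \<and> (x - e * x) * k = 0" if "k \<in> K" for k
    proof -
      have "x * k \<in> K" using Kid that unfolding G.ideal_def by auto
      then show ?thesis using e(2)[OF that] e(2)[of "x * k"]
        by (simp add: right_diff_distrib left_diff_distrib mult.assoc[symmetric])
    qed
    then show ?thesis unfolding N_def by auto
  qed
  define GA where "GA = {a. \<exists>p. a \<in> UNIV \<inter> P p \<and>
      (\<forall>q c. c \<in> C \<inter> P q \<longrightarrow> a * c = (if p \<and> q then - (c * a) else c * a))}"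
  define GB where "GB = {a. \<exists>p. a \<in> range f \<inter> Q p \<and>
      (\<forall>q c. c \<in> f ` C \<inter> Q q \<longrightarrow> a * c = (if p \<and> q then - (c * a) else c * a))}"
  have 1: "f ` GA \<subseteq> GB"
  proof
    fix b assume "b \<in> f ` GA"
    then obtain a p where a: "b = f a" "a \<in> P p"
      "\<And>q c. c \<in> C \<inter> P q \<Longrightarrow> a * c = (if p \<and> q then - (c * a) else c * a)"
      unfolding GA_def by blast
    have "b * c' = (if p \<and> q then - (c' * b) else c' * b)" if cq: "c' \<in> f ` C \<inter> Q q" for q c'
    proof -
      obtain c where c: "c \<in> C" "c' = f c" using cq by auto
      have "f (cp q c) = c'" using fcp cq c by auto
      moreover have "cp q c \<in> C \<inter> P q" using cpC[OF c(1)] cpP by auto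
      ultimately show ?thesis using a(3)[of "cp q c" q] unfolding a(1)
        by (auto simp: fmul[symmetric] fneg)
    qed
    then show "b \<in> GB" unfolding GB_def using a fP by blast
  qed
  have 2: "GB \<subseteq> f ` GA"
  proof
    fix b assume "b \<in> GB"
    then obtain p x where b: "b = f x" "b \<in> Q p"
      "\<And>q c. c \<in> f ` C \<inter> Q q \<Longrightarrow> b * c = (if p \<and> q then - (c * b) else c * b)"
      unfolding GB_def by blast
    define a where "a = cp p x"
    have fa: "f a = b" unfolding a_def using fcp b by auto
    define n where "n = a - e * a"
    have nN: "n \<in> N" unfolding n_def by (rule Nmem)
    have fe: "f e = 0" using e unfolding K_def by auto
    have fn: "f n = b" unfolding n_def using fa fe by (simp add: fdiff fmul)
    define a' where "a' = cp p n"
    have a'N: "a' \<in> N" unfolding a'_def using Ncp nN by auto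
    have fa': "f a' = b" unfolding a'_def using fcp fn b by auto
    have a'P: "a' \<in> P p" unfolding a'_def by (rule cpP)
    have "a' * c = (if p \<and> q then - (c * a') else c * a')" if "c \<in> C \<inter> P q" for q c
    proof -
      define D where "D = a' * c - (if p \<and> q then - (c * a') else c * a')"
      have "D \<in> N" unfolding D_def using Nl Nr a'N G.V.subspace_diff[OF Nsub] G.V.subspace_neg[OF Nsub]
        by auto
      moreover have "f c \<in> f ` C \<inter> Q q" using that fP by auto
      then have "f D = 0" unfolding D_def using b(3)[of "f c" q] fa'
        by (auto simp: fdiff fmul fneg)
      then have "D \<in> K" unfolding K_def by simp
      ultimately have "D = 0" using KN by blast
      then show ?thesis unfolding D_def by simp
    qed
    then have "a' \<in> GA" unfolding GA_def using a'P by blast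
    then show "b \<in> f ` GA" using fa' by blast
  qed
  have "f ` SZ s P UNIV C = H.V.span (f ` GA)"
    unfolding SZ_def GA_def[symmetric] by (rule module_hom.span_image[OF mh, symmetric])
  also have "f ` GA = GB" using 1 2 by blast
  finally show ?thesis unfolding SZ_def GB_def[symmetric] by simp
qed

end
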